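(* Let $0<s\le 1$. If there exists a tight $(\rho(s),\chi)$-bidding profile, then $\chi\ge\chi(s)$, where \[ \rho(s):=\frac{e^s}{s},\qquad \chi(s):=\begin{cases}(e^s-1)/s, & 0<s\le\ln 2,\\ \xi(s)/s, & \ln2\le s\le 1,\end{cases} \] and $\xi(s)$ is the unique solution $\xi\in[1,e]$ of $\xi(2-\ln\xi)=e^s$.
   Context: Given $1<\chi\le\rho$, a $(\rho,\chi)$-bidding profile is a non-decreasing, left-continuous $G:\mathbb{R}\to(0,\infty)$ such that (offset) $G(x)<1$ for $x<0$ and $G(x)\ge1$ for $x>0$; (robustness) $\int_{-\infty}^{x+1}G(t)\,\mathrm{d} t\le\rho G(x)$ for all $x\in\mathbb{R}$; (consistency) $\int_{-\infty}^1G(t)\,\mathrm{d} t\le\chi$. It is tight if additionally $\int_{-\infty}^{x+1}G(t)\,\mathrm{d} t=\rho G(x)$ for all $x\le0$ and $\int_{-\infty}^1G(t)\,\mathrm{d} t=\chi$. *)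

theory Defs
  imports "HOL-Analysis.Analysis"
begin

text \<open>Integrals of the positive function G over half-lines are taken as
non-negative Lebesgue integrals in ennreal, so "the integral is finite and
bounded by ..." is expressed faithfully (an infinite integral violates the bound).\<close>

definition bidding_profile :: "real \<Rightarrow> real \<Rightarrow> (real \<Rightarrow> real) \<Rightarrow> bool" where
  "bidding_profile r c G \<longleftrightarrow>
     1 < c \<and> c \<le> r \<and>
     mono G \<and> (\<forall>x. 0 < G x) \<and> (\<forall>x. continuous (at_left x) G) \<and>
     (\<forall>x<0. G x < 1) \<and> (\<forall>x>0. G x \<ge> 1) \<and>
     (\<forall>x. (\<integral>\<^sup>+ t. ennreal (G t) * indicator {..x+1} t \<partial>lborel) \<le> ennreal (r * G x)) \<and>
     (\<integral>\<^sup>+ t. ennreal (G t) * indicator {..1} t \<partial>lborel) \<le> ennreal c"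

definition tight_bidding_profile :: "real \<Rightarrow> real \<Rightarrow> (real \<Rightarrow> real) \<Rightarrow> bool" where
  "tight_bidding_profile r c G \<longleftrightarrow>
     bidding_profile r c G \<and>
     (\<forall>x\<le>0. (\<integral>\<^sup>+ t. ennreal (G t) * indicator {..x+1} t \<partial>lborel) = ennreal (r * G x)) \<and>
     (\<integral>\<^sup>+ t. ennreal (G t) * indicator {..1} t \<partial>lborel) = ennreal c"

definition rho_s :: "real \<Rightarrow> real" where
  "rho_s s = exp s / s"

definition xi_s :: "real \<Rightarrow> real" where
  "xi_s s = (THE \<xi>. \<xi> \<in> {1..exp 1} \<and> \<xi> * (2 - ln \<xi>) = exp s)"

definition chi_s :: "real \<Rightarrow> real" where
  "chi_s s = (if s \<le> ln 2 then (exp s - 1) / s else xi_s s / s)"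

end

theory Submission
  imports Defs
begin

lemma exp_gt_1_plus: fixes x :: real assumes "x \<noteq> 0" shows "1 + x < exp x"
proof (cases "x < -2")
  case True
  then show ?thesis using exp_gt_zero[of x] by linarith
next
  case False
  have h: "1 + x/2 \<le> exp (x/2)" using exp_ge_add_one_self[of "x/2"] by simp
  have "(1 + x/2)^2 \<le> (exp (x/2))^2" using h False by (intro power_mono) auto
  also have "(exp (x/2))^2 = exp x" by (simp add: power2_eq_square flip: exp_add)
  finally have "(1+x/2)^2 \<le> exp x" .
  moreover have "(1 + x/2)^2 = 1 + x + x^2/4" by (simp add: power2_eq_square field_simps)
  moreover have "x^2 > 0" using assms by simp
  ultimately show ?thesis by linarith
qed

lemma ln_lt_minus_1: fixes x :: real assumes "0 < x" "x \<noteq> 1" shows "ln x < x - 1"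
proof -
  have "ln x \<noteq> 0" using assms by simp
  from exp_gt_1_plus[OF this] show ?thesis using assms by simp
qed

locale prof =
  fixes s :: real and G F :: "real \<Rightarrow> real"
  assumes s_pos: "0 < s" and s_le: "s \<le> 1"
  and G_mono: "mono G" and G_pos: "\<And>x. 0 < G x"
  and G_int: "\<And>y. G integrable_on {..y}"
  and F_def: "\<And>y. F y = integral {..y} G"
  and rob: "\<And>x. F (x+1) \<le> exp s / s * G x"
  and tight: "\<And>x. x \<le> 0 \<Longrightarrow> F (x+1) = exp s / s * G x"
begin

lemma G_iv: "G integrable_on {a..b}"
  by (rule integrable_on_subinterval[OF G_int[of b]]) auto

lemma F_split: assumes "a \<le> b" shows "F b = F a + integral {a..b} G"
proof -
  have "(G has_integral (F a + integral {a..b} G)) ({..a} \<union> {a..b})"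
    unfolding F_def
  proof (rule has_integral_Un)
    have "{..a} \<inter> {a..b} = {a}" using assms by auto
    then show "negligible ({..a} \<inter> {a..b})" by simp
  qed (use G_int G_iv in auto)
  moreover have "{..a} \<union> {a..b} = {..b}" using assms by auto
  ultimately show ?thesis unfolding F_def[of b] using integral_unique by metis
qed

lemma iv_lower: assumes "a \<le> b" shows "(b - a) * G a \<le> integral {a..b} G"
proof -
  have "integral {a..b} (\<lambda>_. G a) \<le> integral {a..b} G"
    by (rule integral_le) (use G_iv G_mono in \<open>auto simp: mono_def\<close>)
  then show ?thesis using assms by simp
qed

lemma iv_upper: assumes "a \<le> b" shows "integral {a..b} G \<le> (b - a) * G b"
proof -
  have "integral {a..b} G \<le> integral {a..b} (\<lambda>_. G b)"
    by (rule integral_le) (use G_iv G_mono in \<open>auto simp: mono_def\<close>)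
  then show ?thesis using assms by simp
qed

lemma F_nonneg: "0 \<le> F y"
  unfolding F_def by (rule integral_nonneg) (use G_int G_pos less_imp_le in auto)

lemma F_pos: "0 < F y"
proof -
  have "F y = F (y-1) + integral {y-1..y} G" using F_split[of "y-1" y] by simp
  moreover have "G (y-1) \<le> integral {y-1..y} G" using iv_lower[of "y-1" y] by simp
  ultimately show ?thesis using F_nonneg[of "y-1"] G_pos[of "y-1"] by linarith
qed

lemma F_mono: assumes "a \<le> b" shows "F a \<le> F b"
  using F_split[OF assms] iv_lower[OF assms] G_pos[of a] assms
  by (smt (verit) mult_nonneg_nonneg)

lemma F_cont_on_iv: "continuous_on {a..b} F"
proof -
  have "continuous_on {a..b} (\<lambda>x. F a + integral {a..x} G)"
    by (intro continuous_intros indefinite_integral_continuous_1 G_iv)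
  then show ?thesis
    by (rule continuous_on_eq) (use F_split in auto)
qed

lemma F_isCont: "isCont F x"
proof -
  have "continuous_on {x-1..x+1} F" by (rule F_cont_on_iv)
  then show ?thesis
    by (rule continuous_on_interior) (auto simp: interior_atLeastAtMost_real)
qed

lemma F_cont: "continuous_on S F"
  by (simp add: F_isCont continuous_at_imp_continuous_on)

lemma F_iv_int: "F integrable_on {a..b}"
  by (rule integrable_continuous_interval) (rule F_cont)

lemma deriv_indef:
  assumes "continuous_on {a..b} f" "a < x" "x < b"
  shows "((\<lambda>y. integral {a..y} f) has_real_derivative f x) (at x)"
proof -
  have "((\<lambda>y. integral {a..y} f) has_real_derivative f x) (at x within {a..b})"
    using assms by (intro integral_has_real_derivative) auto
  moreover have "at x within {a..b} = at x"
    using assms by (intro at_within_interior) (auto simp: interior_atLeastAtMost_real)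
  ultimately show ?thesis by simp
qed

lemma gronwall:
  assumes r: "0 \<le> r" and hG: "\<And>v. r * F v \<le> G v" and ab: "a \<le> b"
  shows "exp (r * (b - a)) * F a \<le> F b"
proof -
  define U where "U y = F a + r * integral {a..y} F" for y
  have UF: "U y \<le> F y" if "a \<le> y" for y
  proof -
    have "integral {a..y} (\<lambda>v. r * F v) \<le> integral {a..y} G"
      by (rule integral_le) (use F_iv_int G_iv hG in \<open>auto intro: integrable_on_mult_right\<close>)
    then have "r * integral {a..y} F \<le> integral {a..y} G" by simp
    then show ?thesis using F_split[OF that] unfolding U_def by linarith
  qed
  define Z where "Z y = exp (-r*y) * U y" for y
  have contZ: "continuous_on {a..b} Z"
    unfolding Z_def U_def
    by (intro continuous_intros indefinite_integral_continuous_1 F_iv_int)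
  have "Z a \<le> Z b"
  proof (rule DERIV_nonneg_imp_increasing_open[OF ab _ contZ])
    fix x assume x: "a < x" "x < b"
    have dU: "(U has_real_derivative r * F x) (at x)"
      unfolding U_def
      using DERIV_add[OF DERIV_const[of "F a"] DERIV_cmult[OF deriv_indef[OF F_cont x], of r]] by simp
    have dE: "((\<lambda>y. exp (-r*y)) has_real_derivative (-r * exp (-r*x))) (at x)"
      by (auto intro!: derivative_eq_intros)
    have "(Z has_real_derivative (-r * exp (-r*x)) * U x + exp (-r*x) * (r * F x)) (at x)"
      unfolding Z_def using DERIV_mult[OF dE dU] by (simp add: mult.commute)
    moreover have "(-r * exp (-r*x)) * U x + exp (-r*x) * (r * F x) = r * exp (-r*x) * (F x - U x)"
      by (simp add: algebra_simps)
    moreover have "0 \<le> r * exp (-r*x) * (F x - U x)" using UF[of x] x r by simp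
    ultimately show "\<exists>y. (Z has_real_derivative y) (at x) \<and> 0 \<le> y" by metis
  qed
  moreover have "Z a = exp (-r*a) * F a" unfolding Z_def U_def by simp
  moreover have "Z b \<le> exp (-r*b) * F b" unfolding Z_def using UF[OF ab] by (simp add: mult_left_mono)
  ultimately have "exp (-r*a) * F a \<le> exp (-r*b) * F b" by linarith
  then have "exp (r*b) * (exp (-r*a) * F a) \<le> exp (r*b) * (exp (-r*b) * F b)"
    by (simp add: mult_left_mono)
  then show ?thesis
    by (simp add: mult.assoc[symmetric] right_diff_distrib flip: exp_add)
qed

lemma rate_iff:
  assumes "a < b"
  shows "exp (r * (b - a)) * F a \<le> F b \<longleftrightarrow> r \<le> ln (F b / F a) / (b - a)"
proof -
  have pa: "0 < F a" "0 < F b" using F_pos by auto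
  have "exp (r * (b - a)) * F a \<le> F b \<longleftrightarrow> exp (r * (b - a)) \<le> F b / F a"
    using pa by (simp add: pos_le_divide_eq)
  also have "\<dots> \<longleftrightarrow> r * (b - a) \<le> ln (F b / F a)"
    using pa by (metis divide_pos_pos exp_le_cancel_iff exp_ln)
  also have "\<dots> \<longleftrightarrow> r \<le> ln (F b / F a) / (b - a)"
    using assms by (simp add: pos_le_divide_eq)
  finally show ?thesis .
qed

lemma growth:
  assumes ab: "a \<le> b"
  shows "exp (s * (b - a)) * F a \<le> F b"
proof -
  define Q where "Q = {ln (F b / F a) / (b - a) | a b. a < b}"
  have Qne: "Q \<noteq> {}" unfolding Q_def by (auto intro: exI[of _ 0] exI[of _ 1])
  have Q0: "0 \<le> q" if "q \<in> Q" for q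
  proof -
    from that obtain a b where q: "q = ln (F b / F a) / (b - a)" "a < b" unfolding Q_def by auto
    have "1 \<le> F b / F a" using F_mono[of a b] F_pos[of a] q by simp
    then show ?thesis using q by simp
  qed
  have bdd: "bdd_below Q" using Q0 by (metis bdd_below.I)
  define m where "m = Inf Q"
  have m0: "0 \<le> m" unfolding m_def using Qne Q0 by (intro cInf_greatest) auto
  have mrate: "exp (m * (b - a)) * F a \<le> F b" if "a < b" for a b
  proof -
    have "m \<le> ln (F b / F a) / (b - a)" unfolding m_def
      by (rule cInf_lower[OF _ bdd]) (use that in \<open>auto simp: Q_def\<close>)
    then show ?thesis using rate_iff[OF that] by simp
  qed
  have "s \<le> m"
  proof (rule ccontr)
    assume "\<not> s \<le> m"
    then have ms: "m < s" by simp
    define r where "r = s * exp (m - s)"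
    have r0: "0 \<le> r" unfolding r_def using s_pos by simp
    have "m < r"
    proof -
      have "1 + (m - s) < exp (m - s)" using exp_gt_1_plus[of "m - s"] ms by simp
      then have "s * (1 + (m - s)) < s * exp (m - s)" using s_pos by simp
      moreover have "s * (1 + (m - s)) - m = (s - m) * (1 - s)" by (simp add: algebra_simps)
      moreover have "0 \<le> (s - m) * (1 - s)" using s_le ms by simp
      ultimately show ?thesis unfolding r_def by linarith
    qed
    have hG: "r * F v \<le> G v" for v
    proof -
      have "exp m * F v \<le> F (v + 1)" using mrate[of v "v+1"] by simp
      also have "\<dots> \<le> exp s / s * G v" by (rule rob)
      finally have "exp m * F v \<le> exp s / s * G v" .
      then have "s * exp (-s) * (exp m * F v) \<le> s * exp (-s) * (exp s / s * G v)"
        using s_pos by (intro mult_left_mono) auto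
      moreover have "s * exp (-s) * (exp s / s * G v) = G v"
      proof -
        have "exp (-s) * exp s = 1" by (simp flip: exp_add)
        then show ?thesis using s_pos by (simp add: field_simps)
      qed
      moreover have "s * exp (-s) * (exp m * F v) = r * F v"
      proof -
        have "exp (m - s) = exp m * exp (-s)" by (simp flip: exp_add)
        then show ?thesis unfolding r_def by (simp add: ac_simps)
      qed
      ultimately show ?thesis by simp
    qed
    have "r \<le> m" unfolding m_def
    proof (rule cInf_greatest[OF Qne])
      fix q assume "q \<in> Q"
      then obtain a b where q: "q = ln (F b / F a) / (b - a)" "a < b" unfolding Q_def by auto
      show "r \<le> q" using gronwall[OF r0 hG, of a b] rate_iff[of a b r] q by simp
    qed
    then show False using \<open>m < r\<close> by simp
  qed
  show ?thesis
  proof (cases "a = b")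
    case True then show ?thesis by simp
  next
    case False
    then have "a < b" using ab by simp
    have "exp (s * (b - a)) * F a \<le> exp (m * (b - a)) * F a"
      using \<open>s \<le> m\<close> \<open>a < b\<close> F_pos[of a] by (intro mult_right_mono) auto
    also have "\<dots> \<le> F b" by (rule mrate[OF \<open>a < b\<close>])
    finally show ?thesis .
  qed
qed

definition "H y = exp (-s*y) * F y"
definition "Lf y = H y - s * integral {y..y+1} H"

lemma H_mono: assumes "a \<le> b" shows "H a \<le> H b"
proof -
  have "exp (s * (b - a)) * F a \<le> F b" by (rule growth[OF assms])
  then have "exp (-s*b) * (exp (s * (b - a)) * F a) \<le> exp (-s*b) * F b"
    by (simp add: mult_left_mono)
  moreover have "exp (-s*b) * exp (s * (b - a)) = exp (-s*a)"
    by (simp add: algebra_simps flip: exp_add)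
  ultimately have "exp (-s*a) * F a \<le> exp (-s*b) * F b"
    by (metis mult.assoc)
  then show ?thesis unfolding H_def .
qed

lemma H_nonneg: "0 \<le> H y" unfolding H_def using F_nonneg by simp

lemma H_cont: "continuous_on S H"
  unfolding H_def by (intro continuous_intros F_cont)

lemma H_int: "H integrable_on {a..b}"
  by (rule integrable_continuous_interval) (rule H_cont)

lemma G_neg: assumes "v \<le> 0" shows "G v = s * exp (-s) * F (v+1)"
proof -
  have h: "exp s * exp (-s) = 1" by (simp flip: exp_add)
  have "G v = (exp s / s * G v) * (s * exp (-s))" using h s_pos by (simp add: field_simps)
  also have "\<dots> = s * exp (-s) * F (v+1)" using tight[OF assms] by simp
  finally show ?thesis .
qed

lemma F_deriv_neg: assumes "y < 0" shows "(F has_real_derivative G y) (at y)"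
proof -
  define c where "c = y - 1"
  have cG: "continuous_on {c..0} G"
  proof (rule continuous_on_eq[where f="\<lambda>v. s * exp (-s) * F (v+1)"])
    show "continuous_on {c..0} (\<lambda>v. s * exp (-s) * F (v+1))"
      by (intro continuous_intros continuous_on_compose2[OF F_cont[of UNIV]]) auto
  qed (use G_neg in auto)
  have "((\<lambda>z. F c + integral {c..z} G) has_real_derivative G y) (at y)"
    using DERIV_add[OF DERIV_const[of "F c"] deriv_indef[OF cG, of y]] assms unfolding c_def by simp
  then show ?thesis
  proof (rule has_field_derivative_transform_within_open[where S="{c<..}"])
    fix z assume "z \<in> {c<..}"
    then show "F c + integral {c..z} G = F z" using F_split[of c z] by simp
  qed (auto simp: c_def)
qed

lemma Lf_const: assumes "x < 0" shows "Lf x = Lf 0"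
proof -
  define c where "c = x - 1"
  define P where "P z = integral {c..z} H" for z
  define L2 where "L2 y = H y - s * (P (y+1) - P y)" for y
  have LL: "Lf y = L2 y" if "x \<le> y" for y
  proof -
    have "integral {c..y} H + integral {y..y+1} H = integral {c..y+1} H"
      using Henstock_Kurzweil_Integration.integral_combine[where a=c and c=y and b="y+1" and f=H] that c_def H_int by simp
    then show ?thesis unfolding Lf_def L2_def P_def by simp
  qed
  have Pc: "continuous_on {c..1} P" unfolding P_def
    by (intro indefinite_integral_continuous_1 H_int)
  have contL2: "continuous_on {x..0} L2" unfolding L2_def
  proof (intro continuous_intros H_cont)
    show "continuous_on {x..0} (\<lambda>y. P (y + 1))"
      by (rule continuous_on_compose2[OF Pc]) (auto simp: c_def intro!: continuous_intros)
    show "continuous_on {x..0} P"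
      by (rule continuous_on_subset[OF Pc]) (auto simp: c_def)
  qed
  have dL2: "(L2 has_real_derivative 0) (at y)" if y: "x < y" "y < 0" for y
  proof -
    have dH: "(H has_real_derivative (-s * exp (-s*y)) * F y + exp (-s*y) * G y) (at y)"
    proof -
      have dE: "((\<lambda>y. exp (-s*y)) has_real_derivative (-s * exp (-s*y))) (at y)"
        by (auto intro!: derivative_eq_intros)
      show ?thesis unfolding H_def[abs_def] using DERIV_mult[OF dE F_deriv_neg[of y]] y
        by (simp add: mult.commute)
    qed
    have dP: "(P has_real_derivative H z) (at z)" if "c < z" "z < 1" for z
      unfolding P_def[abs_def] by (rule deriv_indef[OF H_cont that])
    have dP1: "((\<lambda>y. P (y+1)) has_real_derivative H (y+1)) (at y)"
      using dP[of "y+1"] y c_def DERIV_shift[of P "H (y+1)" y 1] by simp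
    have dP0: "(P has_real_derivative H y) (at y)" using dP[of y] y c_def by simp
    have "(L2 has_real_derivative ((-s * exp (-s*y)) * F y + exp (-s*y) * G y) - s * (H (y+1) - H y)) (at y)"
      unfolding L2_def[abs_def]
      by (intro DERIV_diff DERIV_cmult dH dP1 dP0)
    moreover have "((-s * exp (-s*y)) * F y + exp (-s*y) * G y) - s * (H (y+1) - H y) = 0"
    proof -
      have "exp (-s*y) * exp (-s) = exp (-s*(y+1))" by (simp add: algebra_simps flip: exp_add)
      moreover have gy: "G y = s * exp (-s) * F (y+1)" using G_neg y by simp
      ultimately show ?thesis unfolding H_def gy
        by (simp add: algebra_simps)
    qed
    ultimately show ?thesis by simp
  qed
  have "L2 0 = L2 x"
    by (rule DERIV_isconst2[OF assms contL2 dL2]) (use assms in auto)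
  then show ?thesis using LL[of 0] LL[of x] assms by simp
qed

lemma Lf_lower: "H x - s * H (x+1) \<le> Lf x"
proof -
  have "integral {x..x+1} H \<le> integral {x..x+1} (\<lambda>_. H (x+1))"
    by (rule integral_le) (auto intro: H_int H_mono)
  then have "integral {x..x+1} H \<le> H (x+1)" by simp
  then show ?thesis unfolding Lf_def using s_pos by (simp add: mult_left_mono)
qed

lemma K_nonneg: "0 \<le> Lf 0"
proof (rule ccontr)
  assume "\<not> 0 \<le> Lf 0"
  then have neg: "Lf 0 < 0" by simp
  define \<Lambda> where "\<Lambda> = Inf (H ` {..0})"
  have bdd: "bdd_below (H ` {..0})" by (metis H_nonneg bdd_belowI2)
  have \<Lambda>0: "0 \<le> \<Lambda>" unfolding \<Lambda>_def using H_nonneg by (intro cInf_greatest) auto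
  define e where "e = - Lf 0 / 2"
  have e: "0 < e" using neg e_def by simp
  have "\<Lambda> < \<Lambda> + e" using e by simp
  then have "\<exists>x\<in>{..0}. H x < \<Lambda> + e"
    unfolding \<Lambda>_def using cInf_less_iff[OF _ bdd] by blast
  then obtain y where y: "y \<le> 0" "H y < \<Lambda> + e" by auto
  have "\<Lambda> \<le> H (y - 1)" unfolding \<Lambda>_def by (rule cInf_lower[OF _ bdd]) (use y in auto)
  have "Lf 0 = Lf (y - 1)" using Lf_const[of "y-1"] y by simp
  also have "\<dots> \<ge> H (y-1) - s * H y" using Lf_lower[of "y-1"] by simp
  finally have "H (y-1) - s * H y \<le> Lf 0" .
  moreover have "s * H y \<le> s * (\<Lambda> + e)" using y s_pos by (intro mult_left_mono) auto
  moreover have "s * (\<Lambda> + e) \<le> \<Lambda> + e" using s_le \<Lambda>0 e s_pos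
    by (intro mult_left_le_one_le) auto
  ultimately have "\<Lambda> - (\<Lambda> + e) \<le> Lf 0" using \<open>\<Lambda> \<le> H (y - 1)\<close> by linarith
  then show False using e_def neg by simp
qed

lemma exp_int: "((\<lambda>u. exp (-s*u)) has_integral (1 - exp (-s)) / s) {0..1}"
proof -
  have "((\<lambda>u. exp (-s*u)) has_integral ((- exp (-s*1) / s) - (- exp (-s*0) / s))) {0..1}"
  proof (rule fundamental_theorem_of_calculus)
    fix x :: real assume "x \<in> {0..1}"
    have "((\<lambda>u. - exp (-s*u) / s) has_real_derivative exp (-s*x)) (at x)"
      using s_pos by (auto intro!: derivative_eq_intros)
    then show "((\<lambda>u. - exp (-s*u) / s) has_vector_derivative exp (-s*x)) (at x within {0..1})"
      by (simp add: has_real_derivative_iff_has_vector_derivative has_vector_derivative_at_within)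
  qed simp
  then show ?thesis by (simp add: diff_divide_distrib)
qed

lemma lower_bound:
  assumes mc: "continuous_on {0..1} m" and mG: "\<And>u. 0 < u \<Longrightarrow> u \<le> 1 \<Longrightarrow> m u \<le> G u"
  shows "integral {0..1} (\<lambda>u. exp (-s*u) * m u) \<le> exp (-s) * F 1"
proof -
  define M where "M u = integral {0..u} m" for u
  have Mc: "continuous_on {0..1} M" unfolding M_def
    by (intro indefinite_integral_continuous_1 integrable_continuous_interval mc)
  have MF: "F 0 + M u \<le> F u" if u: "0 \<le> u" "u \<le> 1" for u
  proof -
    define G2 where "G2 v = (if v = 0 then m 0 else G v)" for v
    have e: "integral {0..u} G = integral {0..u} G2"
      by (rule integral_spike[where S="{0}"]) (auto simp: G2_def)
    have i: "G2 integrable_on {0..u}"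
      by (rule integrable_spike[where S="{0}" and f=G]) (auto simp: G2_def intro: G_iv)
    have mi: "m integrable_on {0..u}"
      by (rule integrable_continuous_interval, rule continuous_on_subset[OF mc]) (use u in auto)
    have "integral {0..u} m \<le> integral {0..u} G2"
      by (rule integral_le[OF mi i]) (use u mG in \<open>auto simp: G2_def\<close>)
    then show ?thesis using F_split[of 0 u] u e unfolding M_def by simp
  qed
  have c1: "continuous_on {0..1} (\<lambda>u. exp (-s*u) * (F 0 + M u))"
    by (intro continuous_intros Mc)
  have "integral {0..1} (\<lambda>u. exp (-s*u) * (F 0 + M u)) \<le> integral {0..1} H"
    by (rule integral_le[OF integrable_continuous_interval[OF c1] H_int])
       (auto simp: H_def intro!: mult_left_mono MF)
  moreover have "integral {0..1} (\<lambda>u. exp (-s*u) * (F 0 + M u))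
      = F 0 * ((1 - exp (-s)) / s) + integral {0..1} (\<lambda>u. exp (-s*u) * M u)"
  proof -
    have i1: "(\<lambda>u. F 0 * exp (-s*u)) integrable_on {0..1}"
      by (intro integrable_continuous_interval continuous_intros)
    have i2: "(\<lambda>u. exp (-s*u) * M u) integrable_on {0..1}"
      by (intro integrable_continuous_interval continuous_intros Mc)
    have "integral {0..1} (\<lambda>u. exp (-s*u) * (F 0 + M u))
        = integral {0..1} (\<lambda>u. F 0 * exp (-s*u) + exp (-s*u) * M u)"
      by (simp add: algebra_simps)
    also have "\<dots> = integral {0..1} (\<lambda>u. F 0 * exp (-s*u)) + integral {0..1} (\<lambda>u. exp (-s*u) * M u)"
      by (rule integral_add[OF i1 i2])
    also have "integral {0..1} (\<lambda>u. F 0 * exp (-s*u)) = F 0 * ((1 - exp (-s)) / s)"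
      using integral_unique[OF exp_int] by simp
    finally show ?thesis .
  qed
  moreover have "s * integral {0..1} H \<le> F 0"
    using K_nonneg unfolding Lf_def H_def by simp
  ultimately have A: "s * (F 0 * ((1 - exp (-s)) / s) + integral {0..1} (\<lambda>u. exp (-s*u) * M u)) \<le> F 0"
    using s_pos by (smt (verit) mult_left_mono)
  have hd: "((\<lambda>u. - exp (-s*u) * M u) has_vector_derivative (s * exp (-s*x) * M x - exp (-s*x) * m x)) (at x within {0..1})"
    if x: "x \<in> {0..1}" for x
  proof -
    have dM: "(M has_real_derivative m x) (at x within {0..1})"
      unfolding M_def[abs_def] by (rule integral_has_real_derivative[OF mc x])
    have dE: "((\<lambda>u. - exp (-s*u)) has_real_derivative s * exp (-s*x)) (at x within {0..1})"
      by (auto intro!: derivative_eq_intros)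
    have "((\<lambda>u. - exp (-s*u) * M u) has_real_derivative (s * exp (-s*x)) * M x + (- exp (-s*x)) * m x) (at x within {0..1})"
      using DERIV_mult[OF dE dM] by (simp add: mult.commute)
    then show ?thesis
      by (simp add: has_real_derivative_iff_has_vector_derivative)
  qed
  have B: "((\<lambda>u. s * exp (-s*u) * M u - exp (-s*u) * m u) has_integral (- exp (-s) * M 1 - (- exp (-s*0) * M 0))) {0..1}"
    using fundamental_theorem_of_calculus[of 0 1 "\<lambda>u. - exp (-s*u) * M u" "\<lambda>x. s * exp (-s*x) * M x - exp (-s*x) * m x"] hd
    by simp
  have M0: "M 0 = 0" unfolding M_def by simp
  have "integral {0..1} (\<lambda>u. s * exp (-s*u) * M u - exp (-s*u) * m u)
      = s * integral {0..1} (\<lambda>u. exp (-s*u) * M u) - integral {0..1} (\<lambda>u. exp (-s*u) * m u)"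
  proof -
    have i2: "(\<lambda>u. s * (exp (-s*u) * M u)) integrable_on {0..1}"
      by (intro integrable_continuous_interval continuous_intros Mc)
    have i3: "(\<lambda>u. exp (-s*u) * m u) integrable_on {0..1}"
      by (intro integrable_continuous_interval continuous_intros mc)
    have "integral {0..1} (\<lambda>u. s * exp (-s*u) * M u - exp (-s*u) * m u)
       = integral {0..1} (\<lambda>u. s * (exp (-s*u) * M u) - exp (-s*u) * m u)"
      by (simp add: mult.assoc)
    also have "\<dots> = integral {0..1} (\<lambda>u. s * (exp (-s*u) * M u)) - integral {0..1} (\<lambda>u. exp (-s*u) * m u)"
      by (rule integral_diff[OF i2 i3])
    finally show ?thesis by simp
  qed
  then have C: "s * integral {0..1} (\<lambda>u. exp (-s*u) * M u) - integral {0..1} (\<lambda>u. exp (-s*u) * m u) = - exp (-s) * M 1"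
    using integral_unique[OF B] M0 by simp
  have "F 0 + M 1 \<le> F 1" using MF[of 1] by simp
  then have D: "exp (-s) * (F 0 + M 1) \<le> exp (-s) * F 1" by simp
  have "s * (F 0 * ((1 - exp (-s)) / s)) = F 0 - exp (-s) * F 0" using s_pos by (simp add: field_simps)
  then show ?thesis using A C D by (simp add: algebra_simps)
qed

end

lemma conv:
  fixes G :: "real \<Rightarrow> real"
  assumes mono: "mono G" and pos: "\<And>x. 0 < G x"
    and bnd: "(\<integral>\<^sup>+ t. ennreal (G t) * indicator {..y} t \<partial>lborel) \<le> ennreal B"
  shows "G integrable_on {..y} \<and> (\<integral>\<^sup>+ t. ennreal (G t) * indicator {..y} t \<partial>lborel) = ennreal (integral {..y} G)"
proof -
  let ?N = "(\<integral>\<^sup>+ t. ennreal (G t) * indicator {..y} t \<partial>lborel)"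
  have "?N < top" using bnd by (metis ennreal_less_top le_less_trans)
  then obtain r where r: "0 \<le> r" "?N = ennreal r" using less_top_ennreal by metis
  define f where "f x = indicator {..y} x * G x" for x
  have fm: "f \<in> borel_measurable borel" unfolding f_def
    using borel_measurable_mono[OF mono] by measurable
  have "(\<integral>\<^sup>+ x. f x \<partial>lborel) = ?N"
    by (intro nn_integral_cong) (auto simp: f_def indicator_def)
  then have "(f has_integral r) UNIV"
    using r fm pos by (intro nn_integral_has_integral) (auto simp: f_def indicator_def less_imp_le)
  then have "((\<lambda>x. if x \<in> {..y} then G x else 0) has_integral r) UNIV"
    by (rule has_integral_cong[THEN iffD1, rotated]) (auto simp: f_def indicator_def)
  then have hi: "(G has_integral r) {..y}" by (simp only: has_integral_restrict_UNIV)
  then show ?thesis using r by (auto simp: integral_unique)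
qed

lemma exp_int_gen:
  fixes s b :: real assumes "0 < s" "0 \<le> b"
  shows "((\<lambda>u. exp (-s*u)) has_integral (1 - exp (-s*b)) / s) {0..b}"
proof -
  have "((\<lambda>u. exp (-s*u)) has_integral ((\<lambda>u. - exp (-s*u) / s) b - (\<lambda>u. - exp (-s*u) / s) 0)) {0..b}"
  proof (rule fundamental_theorem_of_calculus)
    fix x :: real assume "x \<in> {0..b}"
    have "((\<lambda>u. - exp (-s*u) / s) has_real_derivative exp (-s*x)) (at x)"
      using assms by (auto intro!: derivative_eq_intros)
    then show "((\<lambda>u. - exp (-s*u) / s) has_vector_derivative exp (-s*x)) (at x within {0..b})"
      by (simp add: has_real_derivative_iff_has_vector_derivative has_vector_derivative_at_within)
  qed (use assms in simp)
  then show ?thesis by (simp add: diff_divide_distrib)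
qed

lemma phi_strict:
  fixes a b :: real assumes "1 \<le> a" "a < b" "b \<le> exp 1"
  shows "a * (2 - ln a) < b * (2 - ln b)"
proof -
  have "ln (b / a) < b / a - 1" using assms by (intro ln_lt_minus_1) auto
  then have "ln b - ln a < b / a - 1" using assms by (simp add: ln_div)
  then have "a * (ln b - ln a) < a * (b / a - 1)" using assms by (intro mult_strict_left_mono) auto
  moreover have "a * (b / a - 1) = b - a" using assms by (simp add: field_simps)
  ultimately have h1: "a * (ln b - ln a) < b - a" by simp
  have "ln b \<le> ln (exp 1)" using assms by (subst ln_le_cancel_iff) auto
  then have "ln b \<le> 1" by simp
  then have h2: "(b - a) * ln b \<le> (b - a) * 1" using assms by (intro mult_left_mono) auto
  have "b * ln b - a * ln a = (b - a) * ln b + a * (ln b - ln a)" by (simp add: algebra_simps)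
  then show ?thesis using h1 h2 by (simp add: algebra_simps)
qed

lemma xi_char:
  fixes s :: real assumes "ln 2 \<le> s" "s \<le> 1"
  shows "xi_s s \<in> {1..exp 1} \<and> xi_s s * (2 - ln (xi_s s)) = exp s"
proof -
  let ?P = "\<lambda>\<xi>::real. \<xi> \<in> {1..exp 1} \<and> \<xi> * (2 - ln \<xi>) = exp s"
  have "exp (ln 2) \<le> exp s" using assms by (simp only: exp_le_cancel_iff)
  then have e2: "2 \<le> exp s" by simp
  have e1: "exp s \<le> exp 1" using assms by simp
  have "\<exists>x. 1 \<le> x \<and> x \<le> exp 1 \<and> x * (2 - ln x) = exp s"
  proof (rule IVT')
    show "1 * (2 - ln 1) \<le> exp s" using e2 by simp
    show "exp s \<le> exp 1 * (2 - ln (exp 1))" using e1 by simp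
    show "1 \<le> exp (1::real)" by simp
    show "continuous_on {1..exp 1} (\<lambda>x::real. x * (2 - ln x))"
      by (rule continuous_at_imp_continuous_on) (auto intro!: continuous_intros Transcendental.isCont_ln_pos)
  qed
  then obtain x where x: "?P x" by auto
  have "xi_s s = x" unfolding xi_s_def
  proof (rule the_equality)
    show "?P x" by (rule x)
    fix y assume y: "?P y"
    show "y = x"
    proof (rule ccontr)
      assume "y \<noteq> x"
      then have "y < x \<or> x < y" by auto
      then show False using phi_strict[of y x] phi_strict[of x y] x y by auto
    qed
  qed
  then show ?thesis using x by simp
qed

theorem theorem3:
  fixes s c :: real and G :: "real \<Rightarrow> real"
  assumes "0 < s" and "s \<le> 1"
    and "tight_bidding_profile (rho_s s) c G"
  shows "c \<ge> chi_s s"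
proof -
  note A = assms(3)[unfolded tight_bidding_profile_def bidding_profile_def rho_s_def]
  have c1: "1 < c" and cr: "c \<le> exp s / s" and mono: "mono G" and pos: "\<And>x. 0 < G x"
    and off: "\<And>x. 0 < x \<Longrightarrow> 1 \<le> G x"
    and robN: "\<And>x. (\<integral>\<^sup>+ t. ennreal (G t) * indicator {..x+1} t \<partial>lborel) \<le> ennreal (exp s / s * G x)"
    and tightN: "\<And>x. x \<le> 0 \<Longrightarrow> (\<integral>\<^sup>+ t. ennreal (G t) * indicator {..x+1} t \<partial>lborel) = ennreal (exp s / s * G x)"
    and consN: "(\<integral>\<^sup>+ t. ennreal (G t) * indicator {..1} t \<partial>lborel) = ennreal c"
    using A by auto
  define F where "F y = integral {..y} G" for y
  have cv: "G integrable_on {..y} \<and> (\<integral>\<^sup>+ t. ennreal (G t) * indicator {..y} t \<partial>lborel) = ennreal (F y)" for y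
    unfolding F_def using conv[OF mono pos robN[of "y-1"]] by simp
  have rhopos: "0 \<le> exp s / s * G x" for x using assms(1) pos[of x] by (simp add: less_imp_le)
  have Fnn: "0 \<le> F y" for y unfolding F_def
    by (rule integral_nonneg) (use cv pos less_imp_le in auto)
  interpret prof s G F
  proof
    show "F (x+1) \<le> exp s / s * G x" for x using robN[of x] cv[of "x+1"] rhopos[of x] by simp
    show "F (x+1) = exp s / s * G x" if "x \<le> 0" for x
      using tightN[OF that] cv[of "x+1"] rhopos[of x] Fnn[of "x+1"] by simp
  qed (use assms(1,2) mono pos cv F_def in auto)
  have F1: "F 1 = c" using consN cv[of 1] c1 Fnn[of 1] by simp
  have spos: "0 < s" by (rule assms(1))
  have es: "exp s * exp (-s) = 1" by (simp flip: exp_add)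
  have base: "(exp s - 1) / s \<le> c"
  proof -
    have "integral {0..1} (\<lambda>u. exp (-s*u) * (\<lambda>_. 1::real) u) \<le> exp (-s) * F 1"
      by (rule lower_bound) (use off in auto)
    then have "(1 - exp (-s)) / s \<le> exp (-s) * c" using integral_unique[OF exp_int] F1 by simp
    then have "exp s * ((1 - exp (-s)) / s) \<le> exp s * (exp (-s) * c)" by (rule mult_left_mono) auto
    moreover have "exp s * ((1 - exp (-s)) / s) = (exp s - 1) / s" using es by (simp add: field_simps)
    moreover have "exp s * (exp (-s) * c) = c" using es by (simp add: mult.assoc[symmetric])
    ultimately show ?thesis by linarith
  qed
  show ?thesis
  proof (cases "s \<le> ln 2")
    case True
    then show ?thesis using base by (simp add: chi_s_def)
  next
    case False
    then have sl2: "ln 2 < s" by simp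
    have "exp (ln 2) < exp s" using sl2 by (simp only: exp_less_cancel_iff)
    then have e2: "2 < exp s" by simp
    define g where "g = c * s * exp (-s)"
    have "c * s \<le> exp s" using cr spos by (simp add: field_simps)
    then have "c * s * exp (-s) \<le> exp s * exp (-s)" by simp
    then have g1: "g \<le> 1" using es g_def by simp
    have "exp s - 1 \<le> c * s" using base spos by (simp add: field_simps)
    then have "(exp s - 1) * exp (-s) \<le> c * s * exp (-s)" by simp
    then have g2: "1 - exp (-s) \<le> g" using es g_def by (simp add: algebra_simps)
    have "exp (-s) < 1/2"
    proof -
      have "exp (-s) * 2 < exp (-s) * exp s" using e2 by simp
      then show ?thesis using es by (simp add: mult.commute)
    qed
    then have g3: "exp (-s) < g" using g2 by simp
    have gpos: "0 < g" using g3 by (smt (verit) exp_gt_zero)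
    define \<theta> where "\<theta> = - ln g / s"
    have lng: "-s < ln g"
      using g3 gpos by (metis ln_exp ln_less_cancel_iff exp_gt_zero)
    have lng0: "ln g \<le> 0" using g1 gpos by simp
    have th0: "0 \<le> \<theta>" unfolding \<theta>_def using lng0 spos by (simp add: divide_nonpos_pos)
    have th1: "\<theta> < 1" unfolding \<theta>_def using lng spos by (simp add: less_divide_eq divide_less_eq)
    have sth: "s * \<theta> = - ln g" unfolding \<theta>_def using spos by simp
    have eth: "exp (-s*\<theta>) = g" using sth gpos by simp
    define m where "m u = max 1 (g * exp (s*u))" for u
    have mG: "m u \<le> G u" if u: "0 < u" "u \<le> 1" for u
    proof -
      have "exp (s * ((u+1) - 1)) * F 1 \<le> F (u+1)" by (rule growth) (use u in simp)
      also have "\<dots> \<le> exp s / s * G u" by (rule rob)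
      finally have "exp (s*u) * c \<le> exp s / s * G u" using F1 by simp
      then have "s * exp (-s) * (exp (s*u) * c) \<le> s * exp (-s) * (exp s / s * G u)"
        using spos by (intro mult_left_mono) auto
      moreover have "s * exp (-s) * (exp s / s * G u) = G u" using es spos by (simp add: field_simps)
      moreover have "s * exp (-s) * (exp (s*u) * c) = g * exp (s*u)" unfolding g_def by (simp add: ac_simps)
      ultimately have "g * exp (s*u) \<le> G u" by simp
      then show ?thesis unfolding m_def using off[OF u(1)] by simp
    qed
    have mc: "continuous_on {0..1} m" unfolding m_def by (intro continuous_intros)
    have LB: "integral {0..1} (\<lambda>u. exp (-s*u) * m u) \<le> exp (-s) * c"
      using lower_bound[OF mc mG] F1 by simp
    define f where "f u = exp (-s*u) * m u" for u
    have fc: "continuous_on S f" for S unfolding f_def m_def by (intro continuous_intros)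
    have fint: "f integrable_on {a..b}" for a b by (rule integrable_continuous_interval[OF fc])
    have split: "integral {0..1} f = integral {0..\<theta>} f + integral {\<theta>..1} f"
      using Henstock_Kurzweil_Integration.integral_combine[where a=0 and c=\<theta> and b=1 and f=f] th0 th1 fint by simp
    have I1: "(1 - g) / s \<le> integral {0..\<theta>} f"
    proof -
      have "integral {0..\<theta>} (\<lambda>u. exp (-s*u)) \<le> integral {0..\<theta>} f"
        by (rule integral_le[OF integrable_continuous_interval fint])
           (auto simp: f_def m_def intro!: continuous_intros)
      moreover have "integral {0..\<theta>} (\<lambda>u. exp (-s*u)) = (1 - g) / s"
        using integral_unique[OF exp_int_gen[OF spos th0]] eth by simp
      ultimately show ?thesis by simp
    qed
    have I2: "(1 - \<theta>) * g \<le> integral {\<theta>..1} f"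
    proof -
      have "integral {\<theta>..1} (\<lambda>_. g) \<le> integral {\<theta>..1} f"
      proof (rule integral_le[OF _ fint])
        show "(\<lambda>_. g) integrable_on {\<theta>..1}" by (rule integrable_const_ivl)
        fix u assume "u \<in> {\<theta>..1}"
        have "exp (-s*u) * (g * exp (s*u)) = g"
          by (simp add: ac_simps flip: exp_add)
        moreover have "exp (-s*u) * (g * exp (s*u)) \<le> exp (-s*u) * m u"
          unfolding m_def by (intro mult_left_mono) auto
        ultimately show "g \<le> f u" unfolding f_def by linarith
      qed
      then show ?thesis using th1 by simp
    qed
    have key: "(1 - g) / s + (1 - \<theta>) * g \<le> g / s"
    proof -
      have "exp (-s) * c = g / s" unfolding g_def using spos by simp
      then show ?thesis using LB I1 I2 split unfolding f_def by simp
    qed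
    then have "s * ((1 - g) / s + (1 - \<theta>) * g) \<le> s * (g / s)" using spos by (intro mult_left_mono) auto
    moreover have "s * ((1 - g) / s) = 1 - g" using spos by simp
    moreover have "s * ((1 - \<theta>) * g) = s * g - (s * \<theta>) * g" by (simp add: algebra_simps)
    moreover have "s * (g / s) = g" using spos by simp
    ultimately have "(1 - g) + s * g - (s * \<theta>) * g \<le> g" by (simp only: distrib_left)
    moreover have "(s * \<theta>) * g = - (g * ln g)" using sth by simp
    moreover have "g * (2 - s - ln g) = 2 * g - s * g - g * ln g" by (simp add: algebra_simps)
    ultimately have k2: "1 \<le> g * (2 - s - ln g)" by linarith
    define \<xi> where "\<xi> = c * s"
    have xig: "\<xi> = exp s * g" unfolding \<xi>_def g_def using es by (simp add: ac_simps)
    have lnxi: "ln \<xi> = s + ln g" unfolding xig using gpos by (simp add: ln_mult)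
    have phi: "exp s \<le> \<xi> * (2 - ln \<xi>)"
    proof -
      have "exp s * 1 \<le> exp s * (g * (2 - s - ln g))" using k2 by simp
      also have "\<dots> = \<xi> * (2 - ln \<xi>)" by (subst lnxi, simp add: xig algebra_simps)
      finally show ?thesis by simp
    qed
    have xi1: "1 \<le> \<xi>"
    proof -
      have "exp s * exp (-s) \<le> exp s * g" using g3 by simp
      then show ?thesis using es xig by simp
    qed
    have xi2: "\<xi> \<le> exp 1"
    proof -
      have "\<xi> \<le> exp s" unfolding \<xi>_def using \<open>c * s \<le> exp s\<close> .
      also have "\<dots> \<le> exp 1" using assms(2) by simp
      finally show ?thesis .
    qed
    have xc: "xi_s s \<in> {1..exp 1} \<and> xi_s s * (2 - ln (xi_s s)) = exp s"
      by (rule xi_char) (use sl2 assms(2) in auto)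
    have "xi_s s \<le> \<xi>"
    proof (rule ccontr)
      assume "\<not> xi_s s \<le> \<xi>"
      then have "\<xi> < xi_s s" by simp
      then have "\<xi> * (2 - ln \<xi>) < xi_s s * (2 - ln (xi_s s))"
        using phi_strict[of \<xi> "xi_s s"] xi1 xc by auto
      then show False using phi xc by simp
    qed
    then have "xi_s s / s \<le> c" unfolding \<xi>_def using spos by (simp add: divide_le_eq)
    then show ?thesis using False by (simp add: chi_s_def)
  qed
qed

end
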